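(* Fix weights $w_1,w_2\ge 0$ with $w_1+w_2>0$, a cost type (uniform or proportional) and a game type (simultaneous, symmetric simultaneous, or sequential). Then the optimal value of the linear program described below (with the constraints corresponding to these choices) equals the price of anarchy of the class of two-player weighted congestion games with affine costs, player weights $w_1,w_2$, the given cost type and the given game type. The LP: Let the label set be $\mathcal{L}=\{O_1,E_1,O_2,E_2\}$ for simultaneous games and $\mathcal{L}=\{O_1,E_1,O_2,E_2,F_2\}$ for sequential games. Label sets of the players: simultaneous: $\mathcal{L}_1=\{O_1,E_1\}$, $\mathcal{L}_2=\{O_2,E_2\}$; symmetric simultaneous: $\mathcal{L}_1=\mathcal{L}_2=\{O_1,E_1,O_2,E_2\}$; sequential: $\mathcal{L}_1=\{O_1,E_1\}$, $\mathcal{L}_2=\{O_2,E_2,F_2\}$. Let $R=2^{\mathcal{L}}$. Variables: $\alpha_r,\beta_r$ for $r\in R$ and $C_i(a_1,a_2)$ for $i\in\{1,2\}$, $a_1\in\mathcal{L}_1$, $a_2\in\mathcal{L}_2$. Maximize $C_1(E_1,E_2)+C_2(E_1,E_2)$ subject to: $C_1(O_1,O_2)+C_2(O_1,O_2)=1$; $C_1(a_1,a_2)+C_2(a_1,a_2)\ge 1$ for all $a_1\in\mathcal{L}_1,a_2\in\mathcal{L}_2$; $\alpha_r,\beta_r\ge0$ for all $r\in R$; for all $a_1,a_2$ and $i=1,2$: $C_i(a_1,a_2)=\sum_{r\in R:\, a_i\in r}\bigl(\alpha_r+\beta_r\sum_{j\in\{1,2\}:\, a_j\in r} w_j\bigr)$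 in the uniform case, respectively $C_i(a_1,a_2)=w_i\sum_{r\in R:\, a_i\in r}\bigl(\alpha_r+\beta_r\sum_{j\in\{1,2\}:\, a_j\in r} w_j\bigr)$ in the proportional case; in the (symmetric) simultaneous case additionally $C_1(E_1,E_2)\le C_1(a_1,E_2)$ for all $a_1\in\mathcal{L}_1$ and $C_2(E_1,E_2)\le C_2(E_1,a_2)$ for all $a_2\in\mathcal{L}_2$; in the sequential case additionally $C_2(E_1,E_2)\le C_2(E_1,a_2)$ and $C_2(O_1,F_2)\le C_2(O_1,a_2)$ for all $a_2\in\mathcal{L}_2$, and $C_1(E_1,E_2)\le C_1(O_1,F_2)$.
   Context: A weighted two-player congestion game with affine costs consists of a finite set $R'$ of resources, coefficients $\alpha_r,\beta_r \geq 0$ for each $r\in R'$, two players $i=1,2$ with weights $w_i\ge 0$, and for each player $i$ a nonempty finite set $\mathcal{A}_i \subseteq 2^{R'}$ of actions; it is symmetric if $\mathcal{A}_1=\mathcal{A}_2$. For an action profile $A=(A_1,A_2)$ the load of $r$ is $x_r(A)=\sum_{j:\, r\in A_j} w_j$. With uniform costs player $i$ pays $C_i(A)=\sum_{r\in A_i}(\alpha_r+\beta_r x_r(A))$; with proportional costs $C_i(A)=w_i\sum_{r\in A_i}(\alpha_r+\beta_r x_r(A))$. Social cost $C(A)=C_1(A)+C_2(A)$. In simultaneous games the equilibria are pure Nash equilibria (no player can lower her cost by unilaterally deviating). In sequential games player 1 chooses first and player 2 responds after observing $A_1$; a subgame-perfect equilibrium consists of a function $A_1\mapsto A_2^*(A_1)$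 with $C_2(A_1,A_2^*(A_1))\le C_2(A_1,A_2)$ for all $A_1,A_2$ and an action $A_1^*$ with $C_1(A_1^*,A_2^*(A_1^* ))\le C_1(A_1,A_2^*(A_1))$ for all $A_1$, with outcome $(A_1^*,A_2^*(A_1^* ))$. The price of anarchy of an instance is the maximum over equilibrium outcomes $A$ of $C(A)/\min_{A'}C(A')$, and of a class the supremum over its instances (with positive optimal social cost). *)

theory Defs
  imports Complex_Main "HOL-Library.Extended_Real"
begin

datatype cost_type = Uniform | Proportional
datatype game_type = Simultaneous | SymSimultaneous | Sequential

definition wt :: "real \<Rightarrow> real \<Rightarrow> nat \<Rightarrow> real" where
  "wt w1 w2 i = (if i = 1 then w1 else w2)"

definition fac :: "cost_type \<Rightarrow> real \<Rightarrow> real \<Rightarrow> nat \<Rightarrow> real" where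
  "fac ct w1 w2 i = (if ct = Proportional then wt w1 w2 i else 1)"

definition valid_game ::
  "game_type \<Rightarrow> nat set \<Rightarrow> (nat \<Rightarrow> real) \<Rightarrow> (nat \<Rightarrow> real) \<Rightarrow> nat set set \<Rightarrow> nat set set \<Rightarrow> bool" where
  "valid_game gt Rs al be As1 As2 \<longleftrightarrow>
     finite Rs \<and> (\<forall>r\<in>Rs. al r \<ge> 0 \<and> be r \<ge> 0) \<and>
     As1 \<noteq> {} \<and> As2 \<noteq> {} \<and> finite As1 \<and> finite As2 \<and>
     As1 \<subseteq> Pow Rs \<and> As2 \<subseteq> Pow Rs \<and>
     (gt = SymSimultaneous \<longrightarrow> As1 = As2)"

definition load :: "real \<Rightarrow> real \<Rightarrow> nat set \<Rightarrow> nat set \<Rightarrow> nat \<Rightarrow> real" where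
  "load w1 w2 X1 X2 r = (if r \<in> X1 then w1 else 0) + (if r \<in> X2 then w2 else 0)"

definition pcost ::
  "cost_type \<Rightarrow> real \<Rightarrow> real \<Rightarrow> (nat \<Rightarrow> real) \<Rightarrow> (nat \<Rightarrow> real) \<Rightarrow> nat \<Rightarrow> nat set \<Rightarrow> nat set \<Rightarrow> real" where
  "pcost ct w1 w2 al be i X1 X2 =
     fac ct w1 w2 i * (\<Sum>r\<in>(if i = 1 then X1 else X2). al r + be r * load w1 w2 X1 X2 r)"

definition scost ::
  "cost_type \<Rightarrow> real \<Rightarrow> real \<Rightarrow> (nat \<Rightarrow> real) \<Rightarrow> (nat \<Rightarrow> real) \<Rightarrow> nat set \<Rightarrow> nat set \<Rightarrow> real" where
  "scost ct w1 w2 al be X1 X2 = pcost ct w1 w2 al be 1 X1 X2 + pcost ct w1 w2 al be 2 X1 X2"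

definition is_NE where
  "is_NE ct w1 w2 al be As1 As2 X1 X2 \<longleftrightarrow>
     X1 \<in> As1 \<and> X2 \<in> As2 \<and>
     (\<forall>B1\<in>As1. pcost ct w1 w2 al be 1 X1 X2 \<le> pcost ct w1 w2 al be 1 B1 X2) \<and>
     (\<forall>B2\<in>As2. pcost ct w1 w2 al be 2 X1 X2 \<le> pcost ct w1 w2 al be 2 X1 B2)"

text \<open>Outcome of a subgame-perfect equilibrium (player 1 moves first).\<close>
definition is_SPE_outcome where
  "is_SPE_outcome ct w1 w2 al be As1 As2 X1 X2 \<longleftrightarrow>
     (\<exists>f :: nat set \<Rightarrow> nat set.
        (\<forall>B1\<in>As1. f B1 \<in> As2 \<and>
           (\<forall>B2\<in>As2. pcost ct w1 w2 al be 2 B1 (f B1) \<le> pcost ct w1 w2 al be 2 B1 B2)) \<and>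
        X1 \<in> As1 \<and>
        (\<forall>B1\<in>As1. pcost ct w1 w2 al be 1 X1 (f X1) \<le> pcost ct w1 w2 al be 1 B1 (f B1)) \<and>
        X2 = f X1)"

definition is_eq_outcome where
  "is_eq_outcome gt ct w1 w2 al be As1 As2 X1 X2 \<longleftrightarrow>
     (if gt = Sequential then is_SPE_outcome ct w1 w2 al be As1 As2 X1 X2
      else is_NE ct w1 w2 al be As1 As2 X1 X2)"

definition opt_cost where
  "opt_cost ct w1 w2 al be As1 As2 =
     Min {scost ct w1 w2 al be B1 B2 | B1 B2. B1 \<in> As1 \<and> B2 \<in> As2}"

definition poa_class :: "cost_type \<Rightarrow> game_type \<Rightarrow> real \<Rightarrow> real \<Rightarrow> ereal" where
  "poa_class ct gt w1 w2 =
     Sup {ereal (scost ct w1 w2 al be X1 X2 / opt_cost ct w1 w2 al be As1 As2) | Rs al be As1 As2 X1 X2.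
            valid_game gt Rs al be As1 As2 \<and> opt_cost ct w1 w2 al be As1 As2 > 0 \<and>
            is_eq_outcome gt ct w1 w2 al be As1 As2 X1 X2}"

datatype label = O1 | E1 | O2 | E2 | F2

definition Lab :: "game_type \<Rightarrow> label set" where
  "Lab gt = (if gt = Sequential then {O1, E1, O2, E2, F2} else {O1, E1, O2, E2})"

definition Lab1 :: "game_type \<Rightarrow> label set" where
  "Lab1 gt = (if gt = SymSimultaneous then {O1, E1, O2, E2} else {O1, E1})"

definition Lab2 :: "game_type \<Rightarrow> label set" where
  "Lab2 gt = (case gt of Simultaneous \<Rightarrow> {O2, E2}
                       | SymSimultaneous \<Rightarrow> {O1, E1, O2, E2}
                       | Sequential \<Rightarrow> {O2, E2, F2})"

definition sel :: "label \<Rightarrow> label \<Rightarrow> nat \<Rightarrow> label" where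
  "sel a1 a2 j = (if j = 1 then a1 else a2)"

definition lp_feasible ::
  "cost_type \<Rightarrow> game_type \<Rightarrow> real \<Rightarrow> real \<Rightarrow> (label set \<Rightarrow> real) \<Rightarrow> (label set \<Rightarrow> real)
   \<Rightarrow> (nat \<Rightarrow> label \<Rightarrow> label \<Rightarrow> real) \<Rightarrow> bool" where
  "lp_feasible ct gt w1 w2 al be C \<longleftrightarrow>
     C 1 O1 O2 + C 2 O1 O2 = 1 \<and>
     (\<forall>a1\<in>Lab1 gt. \<forall>a2\<in>Lab2 gt. C 1 a1 a2 + C 2 a1 a2 \<ge> 1) \<and>
     (\<forall>r\<in>Pow (Lab gt). al r \<ge> 0 \<and> be r \<ge> 0) \<and>
     (\<forall>a1\<in>Lab1 gt. \<forall>a2\<in>Lab2 gt. \<forall>i\<in>{1, 2}.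
        C i a1 a2 = fac ct w1 w2 i *
          (\<Sum>r\<in>{r\<in>Pow (Lab gt). sel a1 a2 i \<in> r}.
              al r + be r * (\<Sum>j\<in>{j\<in>{1, 2}. sel a1 a2 j \<in> r}. wt w1 w2 j))) \<and>
     (gt \<noteq> Sequential \<longrightarrow>
        (\<forall>a1\<in>Lab1 gt. C 1 E1 E2 \<le> C 1 a1 E2) \<and> (\<forall>a2\<in>Lab2 gt. C 2 E1 E2 \<le> C 2 E1 a2)) \<and>
     (gt = Sequential \<longrightarrow>
        (\<forall>a2\<in>Lab2 gt. C 2 E1 E2 \<le> C 2 E1 a2 \<and> C 2 O1 F2 \<le> C 2 O1 a2) \<and>
        C 1 E1 E2 \<le> C 1 O1 F2)"

definition lp_value :: "cost_type \<Rightarrow> game_type \<Rightarrow> real \<Rightarrow> real \<Rightarrow> ereal" where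
  "lp_value ct gt w1 w2 =
     Sup {ereal (C 1 E1 E2 + C 2 E1 E2) | al be C. lp_feasible ct gt w1 w2 al be C}"

end

theory Submission
  imports Defs
begin

lemma sum_wt: "(\<Sum>j\<in>{j\<in>{1::nat,2}. P j}. wt w1 w2 j) = (if P 1 then w1 else 0) + (if P 2 then w2 else 0)"
proof (cases "P 1"; cases "P 2")
  assume "P 1" "P 2" then have e: "{j\<in>{1::nat,2}. P j} = {1,2}" by auto
  show ?thesis using \<open>P 1\<close> \<open>P 2\<close> by (subst e) (simp add: wt_def)
next
  assume "P 1" "\<not> P 2" then have e: "{j\<in>{1::nat,2}. P j} = {1}" by auto
  show ?thesis using \<open>P 1\<close> \<open>\<not> P 2\<close> by (subst e) (simp add: wt_def)
next
  assume "\<not> P 1" "P 2" then have e: "{j\<in>{1::nat,2}. P j} = {2}" by auto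
  show ?thesis using \<open>\<not> P 1\<close> \<open>P 2\<close> by (subst e) (simp add: wt_def)
next
  assume "\<not> P 1" "\<not> P 2" then have e: "{j\<in>{1::nat,2}. P j} = {}" by auto
  show ?thesis using \<open>\<not> P 1\<close> \<open>\<not> P 2\<close> by (subst e) (simp add: wt_def)
qed

lemma key:
  fixes act :: "label \<Rightarrow> nat set" and c :: real
  assumes fin: "finite Rs" and sub: "\<forall>a\<in>Lab gt. act a \<subseteq> Rs"
    and a1: "a1 \<in> Lab gt" and a2: "a2 \<in> Lab gt" and i: "i \<in> {1,2}"
  shows "fac ct w1 w2 i * (\<Sum>S\<in>{S\<in>Pow (Lab gt). sel a1 a2 i \<in> S}.
      (\<Sum>r\<in>{r\<in>Rs. {a\<in>Lab gt. r \<in> act a} = S}. al r / c) +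
      (\<Sum>r\<in>{r\<in>Rs. {a\<in>Lab gt. r \<in> act a} = S}. be r / c) *
        (\<Sum>j\<in>{j\<in>{1,2}. sel a1 a2 j \<in> S}. wt w1 w2 j))
    = pcost ct w1 w2 al be i (act a1) (act a2) / c"
proof -
  define lab where "lab r = {a\<in>Lab gt. r \<in> act a}" for r
  define a where "a = sel a1 a2 i"
  have aL: "a \<in> Lab gt" using a1 a2 by (simp add: a_def sel_def)
  define h where "h r = (al r + be r * load w1 w2 (act a1) (act a2) r) / c" for r
  have finL: "finite (Lab gt)" by (simp add: Lab_def)
  have step1: "(\<Sum>r\<in>{r\<in>Rs. lab r = S}. al r / c) +
      (\<Sum>r\<in>{r\<in>Rs. lab r = S}. be r / c) * (\<Sum>j\<in>{j\<in>{1,2}. sel a1 a2 j \<in> S}. wt w1 w2 j)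
      = (\<Sum>r\<in>{r\<in>Rs. lab r = S}. h r)" for S
  proof -
    have L: "(\<Sum>j\<in>{j\<in>{1,2}. sel a1 a2 j \<in> S}. wt w1 w2 j) = load w1 w2 (act a1) (act a2) r"
      if "r \<in> Rs" "lab r = S" for r
      using that(2)[symmetric] a1 a2 unfolding sum_wt by (auto simp: load_def sel_def lab_def)
    have "(\<Sum>r\<in>{r\<in>Rs. lab r = S}. al r / c) +
      (\<Sum>r\<in>{r\<in>Rs. lab r = S}. be r / c) * (\<Sum>j\<in>{j\<in>{1,2}. sel a1 a2 j \<in> S}. wt w1 w2 j)
      = (\<Sum>r\<in>{r\<in>Rs. lab r = S}. al r / c + be r / c * (\<Sum>j\<in>{j\<in>{1,2}. sel a1 a2 j \<in> S}. wt w1 w2 j))"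
      by (simp add: sum.distrib sum_distrib_right)
    also have "\<dots> = (\<Sum>r\<in>{r\<in>Rs. lab r = S}. h r)"
      by (rule sum.cong) (use L in \<open>auto simp: h_def add_divide_distrib\<close>)
    finally show ?thesis .
  qed
  have step2: "(\<Sum>S\<in>{S\<in>Pow (Lab gt). a \<in> S}. (\<Sum>r\<in>{r\<in>Rs. lab r = S}. h r))
      = (\<Sum>r\<in>{r\<in>Rs. a \<in> lab r}. h r)"
  proof -
    have "(\<Sum>S\<in>{S\<in>Pow (Lab gt). a \<in> S}. (\<Sum>r\<in>{x. x\<in>{r\<in>Rs. a \<in> lab r} \<and> lab x = S}. h r))
      = (\<Sum>r\<in>{r\<in>Rs. a \<in> lab r}. h r)"
      by (rule sum.group) (use fin finL in \<open>auto simp: lab_def\<close>)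
    moreover have "(\<Sum>r\<in>{x. x\<in>{r\<in>Rs. a \<in> lab r} \<and> lab x = S}. h r) = (\<Sum>r\<in>{r\<in>Rs. lab r = S}. h r)"
      if "S \<in> {S\<in>Pow (Lab gt). a \<in> S}" for S
      using that by (intro sum.cong) auto
    ultimately show ?thesis by simp
  qed
  have step3: "{r\<in>Rs. a \<in> lab r} = act a" using sub aL by (auto simp: lab_def)
  have "pcost ct w1 w2 al be i (act a1) (act a2) / c = fac ct w1 w2 i * (\<Sum>r\<in>act a. h r)"
    by (simp add: pcost_def h_def a_def sel_def flip: sum_divide_distrib)
  then show ?thesis
    using step1 step2 step3 by (simp add: lab_def[abs_def] a_def)
qed


lemma lab_facts:
  "O1 \<in> Lab1 gt" "E1 \<in> Lab1 gt" "O2 \<in> Lab2 gt" "E2 \<in> Lab2 gt"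
  "Lab1 gt \<subseteq> Lab gt" "Lab2 gt \<subseteq> Lab gt" "Lab gt \<subseteq> Lab1 gt \<union> Lab2 gt"
  "gt = Sequential \<Longrightarrow> Lab1 gt = {O1, E1}"
  "gt = Sequential \<Longrightarrow> Lab2 gt = {O2, E2, F2}"
  "gt = SymSimultaneous \<Longrightarrow> Lab1 gt = Lab2 gt"
  "finite (Lab gt)" "finite (Lab1 gt)" "finite (Lab2 gt)"
  by (cases gt; auto simp: Lab_def Lab1_def Lab2_def)+

lemma game_to_lp:
  assumes vg: "valid_game gt Rs al be As1 As2"
    and cpos: "opt_cost ct w1 w2 al be As1 As2 > 0"
    and eq: "is_eq_outcome gt ct w1 w2 al be As1 As2 X1 X2"
  shows "\<exists>al' be' C. lp_feasible ct gt w1 w2 al' be' C \<and>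
     C 1 E1 E2 + C 2 E1 E2 = scost ct w1 w2 al be X1 X2 / opt_cost ct w1 w2 al be As1 As2"
proof -
  define c where "c = opt_cost ct w1 w2 al be As1 As2"
  have c0: "c > 0" using cpos c_def by simp
  define P where "P = {scost ct w1 w2 al be B1 B2 | B1 B2. B1 \<in> As1 \<and> B2 \<in> As2}"
  have Peq: "P = (\<lambda>(B1,B2). scost ct w1 w2 al be B1 B2) ` (As1 \<times> As2)" unfolding P_def by auto
  have finP: "finite P" using vg unfolding Peq valid_game_def by auto
  have neP: "P \<noteq> {}" using vg unfolding Peq valid_game_def by auto
  have cmin: "c = Min P" by (simp add: c_def opt_cost_def P_def)
  have "c \<in> P" using cmin finP neP by simp
  then obtain B1 B2 where B1: "B1 \<in> As1" and B2: "B2 \<in> As2" and cB: "scost ct w1 w2 al be B1 B2 = c"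
    unfolding P_def by auto
  have cle: "c \<le> scost ct w1 w2 al be Y1 Y2" if "Y1 \<in> As1" "Y2 \<in> As2" for Y1 Y2
  proof -
    have "scost ct w1 w2 al be Y1 Y2 \<in> P" unfolding P_def using that by blast
    then show ?thesis using cmin finP by simp
  qed
  obtain f where f: "gt = Sequential \<longrightarrow>
        (\<forall>B1\<in>As1. f B1 \<in> As2 \<and>
           (\<forall>B2\<in>As2. pcost ct w1 w2 al be 2 B1 (f B1) \<le> pcost ct w1 w2 al be 2 B1 B2)) \<and>
        X1 \<in> As1 \<and>
        (\<forall>B1\<in>As1. pcost ct w1 w2 al be 1 X1 (f X1) \<le> pcost ct w1 w2 al be 1 B1 (f B1)) \<and>
        X2 = f X1"
  proof (cases "gt = Sequential")
    case True
    then show ?thesis using that eq by (auto simp: is_eq_outcome_def is_SPE_outcome_def)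
  next
    case False
    then show ?thesis using that by auto
  qed
  have NE: "gt \<noteq> Sequential \<Longrightarrow> is_NE ct w1 w2 al be As1 As2 X1 X2"
    using eq by (simp add: is_eq_outcome_def)
  have X1: "X1 \<in> As1" and X2: "X2 \<in> As2"
    using f NE B1 by (cases "gt = Sequential"; auto simp: is_NE_def)+
  define act where "act l = (case l of O1 \<Rightarrow> B1 | E1 \<Rightarrow> X1 | O2 \<Rightarrow> B2 | E2 \<Rightarrow> X2 | F2 \<Rightarrow> f B1)" for l
  have act1: "act a \<in> As1" if "a \<in> Lab1 gt" for a
    using that B1 B2 X1 X2 vg by (cases gt) (auto simp: Lab1_def act_def valid_game_def)
  have act2: "act a \<in> As2" if "a \<in> Lab2 gt" for a
    using that B1 B2 X1 X2 vg f by (cases gt) (auto simp: Lab2_def act_def valid_game_def)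
  have sub: "\<forall>a\<in>Lab gt. act a \<subseteq> Rs"
  proof
    fix a assume "a \<in> Lab gt"
    then have "a \<in> Lab1 gt \<or> a \<in> Lab2 gt" using lab_facts(7) by blast
    then show "act a \<subseteq> Rs" using act1 act2 vg unfolding valid_game_def by blast
  qed
  have finR: "finite Rs" using vg by (simp add: valid_game_def)
  define al' where "al' S = (\<Sum>r\<in>{r\<in>Rs. {a\<in>Lab gt. r \<in> act a} = S}. al r / c)" for S
  define be' where "be' S = (\<Sum>r\<in>{r\<in>Rs. {a\<in>Lab gt. r \<in> act a} = S}. be r / c)" for S
  define C where "C i a1 a2 = fac ct w1 w2 i *
          (\<Sum>r\<in>{r\<in>Pow (Lab gt). sel a1 a2 i \<in> r}.
              al' r + be' r * (\<Sum>j\<in>{j\<in>{1, 2}. sel a1 a2 j \<in> r}. wt w1 w2 j))" for i a1 a2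
  have Cp: "C i a1 a2 = pcost ct w1 w2 al be i (act a1) (act a2) / c"
    if "a1 \<in> Lab1 gt" "a2 \<in> Lab2 gt" "i \<in> {1,2}" for i a1 a2
    unfolding C_def al'_def be'_def
    by (rule key[OF finR sub]) (use that lab_facts(5,6) in auto)
  have Cs: "C 1 a1 a2 + C 2 a1 a2 = scost ct w1 w2 al be (act a1) (act a2) / c"
    if "a1 \<in> Lab1 gt" "a2 \<in> Lab2 gt" for a1 a2
    using Cp[OF that, of 1] Cp[OF that, of 2] by (simp add: scost_def add_divide_distrib)
  have feas: "lp_feasible ct gt w1 w2 al' be' C"
    unfolding lp_feasible_def
  proof (intro conjI)
    show "C 1 O1 O2 + C 2 O1 O2 = 1"
      using Cs[OF lab_facts(1,3)] cB c0 by (simp add: act_def)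
    show "\<forall>a1\<in>Lab1 gt. \<forall>a2\<in>Lab2 gt. 1 \<le> C 1 a1 a2 + C 2 a1 a2"
      using Cs cle act1 act2 c0 by simp
    show "\<forall>r\<in>Pow (Lab gt). 0 \<le> al' r \<and> 0 \<le> be' r"
      using vg c0 unfolding al'_def be'_def valid_game_def by (auto intro!: sum_nonneg)
    show "\<forall>a1\<in>Lab1 gt. \<forall>a2\<in>Lab2 gt. \<forall>i\<in>{1, 2}.
        C i a1 a2 = fac ct w1 w2 i *
          (\<Sum>r\<in>{r\<in>Pow (Lab gt). sel a1 a2 i \<in> r}.
              al' r + be' r * (\<Sum>j\<in>{j\<in>{1, 2}. sel a1 a2 j \<in> r}. wt w1 w2 j))"
      by (simp add: C_def)
    show "gt \<noteq> Sequential \<longrightarrow>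
        (\<forall>a1\<in>Lab1 gt. C 1 E1 E2 \<le> C 1 a1 E2) \<and> (\<forall>a2\<in>Lab2 gt. C 2 E1 E2 \<le> C 2 E1 a2)"
    proof (intro impI conjI ballI)
      assume ns: "gt \<noteq> Sequential"
      fix a1 assume a1: "a1 \<in> Lab1 gt"
      show "C 1 E1 E2 \<le> C 1 a1 E2"
        using Cp[OF lab_facts(2,4), of 1] Cp[OF a1 lab_facts(4), of 1] NE[OF ns] act1[OF a1] c0
        by (auto simp: is_NE_def act_def intro!: divide_right_mono)
    next
      assume ns: "gt \<noteq> Sequential"
      fix a2 assume a2: "a2 \<in> Lab2 gt"
      show "C 2 E1 E2 \<le> C 2 E1 a2"
        using Cp[OF lab_facts(2,4), of 2] Cp[OF lab_facts(2) a2, of 2] NE[OF ns] act2[OF a2] c0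
        by (auto simp: is_NE_def act_def intro!: divide_right_mono)
    qed
    show "gt = Sequential \<longrightarrow>
        (\<forall>a2\<in>Lab2 gt. C 2 E1 E2 \<le> C 2 E1 a2 \<and> C 2 O1 F2 \<le> C 2 O1 a2) \<and>
        C 1 E1 E2 \<le> C 1 O1 F2"
    proof (intro impI conjI ballI)
      assume s: "gt = Sequential"
      have F2: "F2 \<in> Lab2 gt" using s lab_facts(9) by auto
      fix a2 assume a2: "a2 \<in> Lab2 gt"
      show "C 2 E1 E2 \<le> C 2 E1 a2"
        using Cp[OF lab_facts(2,4), of 2] Cp[OF lab_facts(2) a2, of 2] f s act2[OF a2] c0 X1
        by (auto simp: act_def intro!: divide_right_mono)
      show "C 2 O1 F2 \<le> C 2 O1 a2"
        using Cp[OF lab_facts(1) F2, of 2] Cp[OF lab_facts(1) a2, of 2] f s act2[OF a2] c0 B1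
        by (auto simp: act_def intro!: divide_right_mono)
    next
      assume s: "gt = Sequential"
      have F2: "F2 \<in> Lab2 gt" using s lab_facts(9) by auto
      show "C 1 E1 E2 \<le> C 1 O1 F2"
        using Cp[OF lab_facts(2,4), of 1] Cp[OF lab_facts(1) F2, of 1] f s c0 B1
        by (auto simp: act_def intro!: divide_right_mono)
    qed
  qed
  moreover have "C 1 E1 E2 + C 2 E1 E2 = scost ct w1 w2 al be X1 X2 / c"
    using Cs[OF lab_facts(2,4)] by (simp add: act_def)
  ultimately show ?thesis unfolding c_def by blast
qed


lemma lp_to_game:
  assumes feas: "lp_feasible ct gt w1 w2 al be C"
  shows "\<exists>Rs al' be' As1 As2 X1 X2. valid_game gt Rs al' be' As1 As2 \<and>
     opt_cost ct w1 w2 al' be' As1 As2 > 0 \<and> is_eq_outcome gt ct w1 w2 al' be' As1 As2 X1 X2 \<and>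
     scost ct w1 w2 al' be' X1 X2 / opt_cost ct w1 w2 al' be' As1 As2 = C 1 E1 E2 + C 2 E1 E2"
proof -
  have finPow: "finite (Pow (Lab gt))" using lab_facts(11) by simp
  obtain enc :: "label set \<Rightarrow> nat" where encinj: "inj_on enc (Pow (Lab gt))"
    using finite_imp_inj_to_nat_seg[OF finPow] by blast
  define Rs where "Rs = enc ` Pow (Lab gt)"
  define dec where "dec = the_inv_into (Pow (Lab gt)) enc"
  have dec: "dec (enc S) = S" if "S \<in> Pow (Lab gt)" for S
    unfolding dec_def using the_inv_into_f_f[OF encinj that] .
  define al' where "al' k = al (dec k)" for k
  define be' where "be' k = be (dec k)" for k
  define act where "act a = enc ` {S\<in>Pow (Lab gt). a \<in> S}" for a
  have finR: "finite Rs" unfolding Rs_def using finPow by simp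
  have sub: "\<forall>a\<in>Lab gt. act a \<subseteq> Rs" unfolding act_def Rs_def by auto
  have labenc: "{a\<in>Lab gt. enc T \<in> act a} = T" if "T \<in> Pow (Lab gt)" for T
  proof -
    have "enc T \<in> act a \<longleftrightarrow> a \<in> T" if "a \<in> Lab gt" for a
      using that \<open>T \<in> Pow (Lab gt)\<close> encinj unfolding act_def
      by (auto dest: inj_onD)
    then show ?thesis using that by auto
  qed
  have fib: "{r\<in>Rs. {a\<in>Lab gt. r \<in> act a} = S} = {enc S}" if "S \<in> Pow (Lab gt)" for S
    using that labenc unfolding Rs_def by auto
  have Cp: "pcost ct w1 w2 al' be' i (act a1) (act a2) = C i a1 a2"
    if a1: "a1 \<in> Lab1 gt" and a2: "a2 \<in> Lab2 gt" and i: "i \<in> {1,2}" for i a1 a2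
  proof -
    have "pcost ct w1 w2 al' be' i (act a1) (act a2) = pcost ct w1 w2 al' be' i (act a1) (act a2) / 1"
      by simp
    also have "\<dots> = fac ct w1 w2 i * (\<Sum>S\<in>{S\<in>Pow (Lab gt). sel a1 a2 i \<in> S}.
      (\<Sum>r\<in>{r\<in>Rs. {a\<in>Lab gt. r \<in> act a} = S}. al' r / 1) +
      (\<Sum>r\<in>{r\<in>Rs. {a\<in>Lab gt. r \<in> act a} = S}. be' r / 1) *
        (\<Sum>j\<in>{j\<in>{1,2}. sel a1 a2 j \<in> S}. wt w1 w2 j))"
      by (rule key[OF finR sub, symmetric]) (use that lab_facts(5,6) in auto)
    also have "\<dots> = fac ct w1 w2 i * (\<Sum>S\<in>{S\<in>Pow (Lab gt). sel a1 a2 i \<in> S}.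
      al S + be S * (\<Sum>j\<in>{j\<in>{1,2}. sel a1 a2 j \<in> S}. wt w1 w2 j))"
      by (intro arg_cong[where f="\<lambda>x. fac ct w1 w2 i * x"] sum.cong refl)
         (simp add: fib dec al'_def be'_def)
    also have "\<dots> = C i a1 a2" using feas a1 a2 i unfolding lp_feasible_def by auto
    finally show ?thesis .
  qed
  have Cs: "scost ct w1 w2 al' be' (act a1) (act a2) = C 1 a1 a2 + C 2 a1 a2"
    if "a1 \<in> Lab1 gt" "a2 \<in> Lab2 gt" for a1 a2
    using Cp[OF that, of 1] Cp[OF that, of 2] by (simp add: scost_def)
  define As1 where "As1 = act ` Lab1 gt"
  define As2 where "As2 = act ` Lab2 gt"
  have vg: "valid_game gt Rs al' be' As1 As2"
    unfolding valid_game_def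
  proof (intro conjI)
    show "\<forall>r\<in>Rs. 0 \<le> al' r \<and> 0 \<le> be' r"
      using feas unfolding lp_feasible_def Rs_def al'_def be'_def by (auto simp: dec)
    show "As1 \<subseteq> Pow Rs" "As2 \<subseteq> Pow Rs"
      unfolding As1_def As2_def using sub lab_facts(5,6) by blast+
    show "gt = SymSimultaneous \<longrightarrow> As1 = As2" using lab_facts(10) As1_def As2_def by auto
    show "finite Rs" by (rule finR)
    show "As1 \<noteq> {}" using lab_facts(1)[of gt] As1_def by blast
    show "As2 \<noteq> {}" using lab_facts(3)[of gt] As2_def by blast
    show "finite As1" using lab_facts(12)[of gt] As1_def by blast
    show "finite As2" using lab_facts(13)[of gt] As2_def by blast
  qed
  have Peq: "{scost ct w1 w2 al' be' B1 B2 | B1 B2. B1 \<in> As1 \<and> B2 \<in> As2}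
      = (\<lambda>(a1,a2). C 1 a1 a2 + C 2 a1 a2) ` (Lab1 gt \<times> Lab2 gt)"
  proof
    show "{scost ct w1 w2 al' be' B1 B2 | B1 B2. B1 \<in> As1 \<and> B2 \<in> As2}
      \<subseteq> (\<lambda>(a1,a2). C 1 a1 a2 + C 2 a1 a2) ` (Lab1 gt \<times> Lab2 gt)"
    proof
      fix y assume "y \<in> {scost ct w1 w2 al' be' B1 B2 | B1 B2. B1 \<in> As1 \<and> B2 \<in> As2}"
      then obtain a1 a2 where a: "a1 \<in> Lab1 gt" "a2 \<in> Lab2 gt" "y = scost ct w1 w2 al' be' (act a1) (act a2)"
        unfolding As1_def As2_def by blast
      then have "y = (\<lambda>(a1,a2). C 1 a1 a2 + C 2 a1 a2) (a1, a2)" using Cs by simp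
      then show "y \<in> (\<lambda>(a1,a2). C 1 a1 a2 + C 2 a1 a2) ` (Lab1 gt \<times> Lab2 gt)" using a by blast
    qed
    show "(\<lambda>(a1,a2). C 1 a1 a2 + C 2 a1 a2) ` (Lab1 gt \<times> Lab2 gt) \<subseteq>
      {scost ct w1 w2 al' be' B1 B2 | B1 B2. B1 \<in> As1 \<and> B2 \<in> As2}"
    proof
      fix y assume "y \<in> (\<lambda>(a1,a2). C 1 a1 a2 + C 2 a1 a2) ` (Lab1 gt \<times> Lab2 gt)"
      then obtain a1 a2 where a: "a1 \<in> Lab1 gt" "a2 \<in> Lab2 gt" "y = C 1 a1 a2 + C 2 a1 a2" by auto
      then have "y = scost ct w1 w2 al' be' (act a1) (act a2)" using Cs by simp
      moreover have "act a1 \<in> As1" "act a2 \<in> As2" using a As1_def As2_def by auto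
      ultimately show "y \<in> {scost ct w1 w2 al' be' B1 B2 | B1 B2. B1 \<in> As1 \<and> B2 \<in> As2}" by blast
    qed
  qed
  have opt: "opt_cost ct w1 w2 al' be' As1 As2 = 1"
    unfolding opt_cost_def Peq
  proof (rule Min_eqI)
    show "finite ((\<lambda>(a1,a2). C 1 a1 a2 + C 2 a1 a2) ` (Lab1 gt \<times> Lab2 gt))"
      using lab_facts(12,13) by simp
    show "1 \<le> y" if "y \<in> (\<lambda>(a1,a2). C 1 a1 a2 + C 2 a1 a2) ` (Lab1 gt \<times> Lab2 gt)" for y
      using that feas unfolding lp_feasible_def by auto
    show "1 \<in> (\<lambda>(a1,a2). C 1 a1 a2 + C 2 a1 a2) ` (Lab1 gt \<times> Lab2 gt)"
    proof (rule rev_image_eqI[of "(O1,O2)"])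
      show "(O1, O2) \<in> Lab1 gt \<times> Lab2 gt" using lab_facts(1,3) by blast
      show "1 = (\<lambda>(a1,a2). C 1 a1 a2 + C 2 a1 a2) (O1, O2)" using feas unfolding lp_feasible_def by simp
    qed
  qed
  have actO1: "{O1} \<in> Pow (Lab gt)" using lab_facts(1,5) by auto
  have neq: "act O1 \<noteq> act E1"
  proof
    assume "act O1 = act E1"
    moreover have "enc {O1} \<in> act O1" using actO1 unfolding act_def by auto
    ultimately have "enc {O1} \<in> act E1" by simp
    then show False using labenc[OF actO1] lab_facts(2,5) by auto
  qed
  have eq: "is_eq_outcome gt ct w1 w2 al' be' As1 As2 (act E1) (act E2)"
  proof (cases "gt = Sequential")
    case True
    have F2: "F2 \<in> Lab2 gt" using True lab_facts(9) by auto
    define f where "f B = (if B = act O1 then act F2 else act E2)" for B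
    have "is_SPE_outcome ct w1 w2 al' be' As1 As2 (act E1) (act E2)"
      unfolding is_SPE_outcome_def
    proof (intro exI[of _ f] conjI ballI)
      fix B1 assume "B1 \<in> As1"
      then have B: "B1 = act O1 \<or> B1 = act E1" using True lab_facts(8) As1_def by auto
      show "f B1 \<in> As2" using B F2 lab_facts(4) by (auto simp: f_def As2_def)
      show "pcost ct w1 w2 al' be' 2 B1 (f B1) \<le> pcost ct w1 w2 al' be' 2 B1 B2" if B2in: "B2 \<in> As2" for B2
      proof -
        obtain a2 where a2: "a2 \<in> Lab2 gt" "B2 = act a2" using B2in As2_def by auto
        show ?thesis using B
        proof
          assume "B1 = act O1"
          then show ?thesis using Cp[OF lab_facts(1) F2, of 2] Cp[OF lab_facts(1) a2(1), of 2]
              feas True a2 unfolding lp_feasible_def by (auto simp: f_def)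
        next
          assume "B1 = act E1"
          then show ?thesis using Cp[OF lab_facts(2,4), of 2] Cp[OF lab_facts(2) a2(1), of 2]
              feas True a2 neq unfolding lp_feasible_def by (auto simp: f_def)
        qed
      qed
      show "pcost ct w1 w2 al' be' 1 (act E1) (f (act E1)) \<le> pcost ct w1 w2 al' be' 1 B1 (f B1)"
        using B
      proof
        assume "B1 = act O1"
        then show ?thesis using Cp[OF lab_facts(1) F2, of 1] Cp[OF lab_facts(2,4), of 1]
            feas True neq unfolding lp_feasible_def by (auto simp: f_def)
      qed simp
    next
      show "act E1 \<in> As1" using lab_facts(2) As1_def by auto
      show "act E2 = f (act E1)" using neq by (simp add: f_def)
    qed
    then show ?thesis using True by (simp add: is_eq_outcome_def)
  next
    case False
    have "is_NE ct w1 w2 al' be' As1 As2 (act E1) (act E2)"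
      unfolding is_NE_def
    proof (intro conjI ballI)
      show "act E1 \<in> As1" using lab_facts(2) As1_def by auto
      show "act E2 \<in> As2" using lab_facts(4) As2_def by auto
      fix B1 assume "B1 \<in> As1"
      then obtain a1 where a1: "a1 \<in> Lab1 gt" "B1 = act a1" using As1_def by auto
      show "pcost ct w1 w2 al' be' 1 (act E1) (act E2) \<le> pcost ct w1 w2 al' be' 1 B1 (act E2)"
        using Cp[OF lab_facts(2,4), of 1] Cp[OF a1(1) lab_facts(4), of 1] feas False a1
        unfolding lp_feasible_def by auto
    next
      fix B2 assume "B2 \<in> As2"
      then obtain a2 where a2: "a2 \<in> Lab2 gt" "B2 = act a2" using As2_def by auto
      show "pcost ct w1 w2 al' be' 2 (act E1) (act E2) \<le> pcost ct w1 w2 al' be' 2 (act E1) B2"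
        using Cp[OF lab_facts(2,4), of 2] Cp[OF lab_facts(2) a2(1), of 2] feas False a2
        unfolding lp_feasible_def by auto
    qed
    then show ?thesis using False by (simp add: is_eq_outcome_def)
  qed
  have "scost ct w1 w2 al' be' (act E1) (act E2) / opt_cost ct w1 w2 al' be' As1 As2 = C 1 E1 E2 + C 2 E1 E2"
    using Cs[OF lab_facts(2,4)] opt by simp
  moreover have "opt_cost ct w1 w2 al' be' As1 As2 > 0" using opt by simp
  ultimately show ?thesis using vg eq by blast
qed

theorem theorem8:
  fixes w1 w2 :: real and ct :: cost_type and gt :: game_type
  assumes "w1 \<ge> 0" and "w2 \<ge> 0" and "w1 + w2 > 0"
  shows "lp_value ct gt w1 w2 = poa_class ct gt w1 w2"
proof -
  have "{ereal (C 1 E1 E2 + C 2 E1 E2) | al be C. lp_feasible ct gt w1 w2 al be C} =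
    {ereal (scost ct w1 w2 al be X1 X2 / opt_cost ct w1 w2 al be As1 As2) | Rs al be As1 As2 X1 X2.
            valid_game gt Rs al be As1 As2 \<and> opt_cost ct w1 w2 al be As1 As2 > 0 \<and>
            is_eq_outcome gt ct w1 w2 al be As1 As2 X1 X2}" (is "?A = ?B")
  proof
    show "?A \<subseteq> ?B"
    proof
      fix x assume "x \<in> ?A"
      then obtain al be C where "lp_feasible ct gt w1 w2 al be C" and x: "x = ereal (C 1 E1 E2 + C 2 E1 E2)"
        by blast
      from lp_to_game[OF this(1)] obtain Rs al' be' As1 As2 X1 X2 where
        "valid_game gt Rs al' be' As1 As2 \<and>
     opt_cost ct w1 w2 al' be' As1 As2 > 0 \<and> is_eq_outcome gt ct w1 w2 al' be' As1 As2 X1 X2 \<and>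
     scost ct w1 w2 al' be' X1 X2 / opt_cost ct w1 w2 al' be' As1 As2 = C 1 E1 E2 + C 2 E1 E2" by blast
      then show "x \<in> ?B" unfolding x mem_Collect_eq
        by (intro exI[of _ Rs] exI[of _ al'] exI[of _ be'] exI[of _ As1] exI[of _ As2] exI[of _ X1] exI[of _ X2]) simp
    qed
    show "?B \<subseteq> ?A"
    proof
      fix x assume "x \<in> ?B"
      then obtain Rs al be As1 As2 X1 X2 where h: "valid_game gt Rs al be As1 As2"
        "opt_cost ct w1 w2 al be As1 As2 > 0" "is_eq_outcome gt ct w1 w2 al be As1 As2 X1 X2"
        and x: "x = ereal (scost ct w1 w2 al be X1 X2 / opt_cost ct w1 w2 al be As1 As2)"
        by blast
      from game_to_lp[OF h] obtain al' be' C where "lp_feasible ct gt w1 w2 al' be' C \<and>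
     C 1 E1 E2 + C 2 E1 E2 = scost ct w1 w2 al be X1 X2 / opt_cost ct w1 w2 al be As1 As2" by blast
      then show "x \<in> ?A" unfolding x mem_Collect_eq
        by (intro exI[of _ al'] exI[of _ be'] exI[of _ C]) simp
    qed
  qed
  then show ?thesis unfolding lp_value_def poa_class_def by simp
qed

end
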